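(* For all $a,b\ge2$: $D_2(a,b)=\binom{a}{2}\binom{b}{2}$; $D_3(2,b)=2\binom{b}{3}$; and $D_4(2,b)=3\binom{b}{3}+9\binom{b}{4}$.
   Context: A grid-labelled graph of type $(a,b)$ is a simple graph whose vertex set is the grid $[a]\times[b]$. An edge $\{(i,j),(k,l)\}$ is diagonal if $i\neq k$ and $j\neq l$. The partial transpose $\Gamma(G)$ is the grid-labelled graph with edge set $\{\{(k,j),(i,l)\}:\{(i,j),(k,l)\}\in E(G)\}$; $G$ satisfies the degree criterion if every vertex has the same degree in $G$ and in $\Gamma(G)$. $D_k(a,b)$ is the number of grid-labelled graphs of type $(a,b)$ with exactly $k$ edges, all diagonal, that satisfy the degree criterion. *)

theory Defs
  imports Main
begin

type_synonym vertex = "nat \<times> nat"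

definition grid :: "nat \<Rightarrow> nat \<Rightarrow> vertex set" where
  "grid a b = {1..a} \<times> {1..b}"

definition grid_graph :: "nat \<Rightarrow> nat \<Rightarrow> vertex set set \<Rightarrow> bool" where
  "grid_graph a b E \<longleftrightarrow> (\<forall>e\<in>E. e \<subseteq> grid a b \<and> card e = 2)"

definition diagonal_edge :: "vertex set \<Rightarrow> bool" where
  "diagonal_edge e \<longleftrightarrow> (\<exists>i j k l. e = {(i,j),(k,l)} \<and> i \<noteq> k \<and> j \<noteq> l)"

definition partial_transpose :: "vertex set set \<Rightarrow> vertex set set" where
  "partial_transpose E = {{(k,j),(i,l)} | i j k l. {(i,j),(k,l)} \<in> E}"

definition degree :: "vertex set set \<Rightarrow> vertex \<Rightarrow> nat" where
  "degree E v = card {e \<in> E. v \<in> e}"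

definition degree_criterion :: "nat \<Rightarrow> nat \<Rightarrow> vertex set set \<Rightarrow> bool" where
  "degree_criterion a b E \<longleftrightarrow>
     (\<forall>v\<in>grid a b. degree E v = degree (partial_transpose E) v)"

definition D :: "nat \<Rightarrow> nat \<Rightarrow> nat \<Rightarrow> nat" where
  "D k a b = card {E. grid_graph a b E \<and> card E = k \<and>
                      (\<forall>e\<in>E. diagonal_edge e) \<and> degree_criterion a b E}"

end

theory Submission
  imports Defs
begin



definition Eul :: "(nat\<times>nat) set \<Rightarrow> bool" where
 "Eul A \<longleftrightarrow> (\<forall>v. card {p\<in>A. fst p = v} = card {p\<in>A. snd p = v})"

definition noloop :: "(nat\<times>nat) set \<Rightarrow> bool" where
 "noloop A \<longleftrightarrow> (\<forall>p\<in>A. fst p \<noteq> snd p)"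

definition c2 :: "nat \<Rightarrow> nat \<Rightarrow> (nat\<times>nat) set" where "c2 x y = {(x,y),(y,x)}"
definition c3 :: "nat \<Rightarrow> nat \<Rightarrow> nat \<Rightarrow> (nat\<times>nat) set" where "c3 x y z = {(x,y),(y,z),(z,x)}"
definition c4 :: "nat \<Rightarrow> nat \<Rightarrow> nat \<Rightarrow> nat \<Rightarrow> (nat\<times>nat) set" where
  "c4 x y z w = {(x,y),(y,z),(z,w),(w,x)}"

lemma Eul_diff:
  assumes "finite A" "C \<subseteq> A" "Eul A" "Eul C" shows "Eul (A - C)"
  unfolding Eul_def
proof
  fix v
  have f: "finite C" using assms(1,2) finite_subset by blast
  have 1: "{p\<in>A-C. fst p = v} = {p\<in>A. fst p = v} - {p\<in>C. fst p = v}" by blast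
  have 2: "{p\<in>A-C. snd p = v} = {p\<in>A. snd p = v} - {p\<in>C. snd p = v}" by blast
  show "card {p\<in>A-C. fst p = v} = card {p\<in>A-C. snd p = v}"
  proof -
    have a: "card ({p\<in>A. fst p = v} - {p\<in>C. fst p = v}) = card {p\<in>A. fst p = v} - card {p\<in>C. fst p = v}"
      by (rule card_Diff_subset) (use f assms(2) in auto)
    have b: "card ({p\<in>A. snd p = v} - {p\<in>C. snd p = v}) = card {p\<in>A. snd p = v} - card {p\<in>C. snd p = v}"
      by (rule card_Diff_subset) (use f assms(2) in auto)
    show ?thesis unfolding 1 2 a b using assms(3,4) unfolding Eul_def by metis
  qed
qed

lemma Eul_union:
  assumes "finite A" "finite B" "A \<inter> B = {}" "Eul A" "Eul B" shows "Eul (A \<union> B)"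
  unfolding Eul_def
proof
  fix v
  have 1: "{p\<in>A\<union>B. fst p = v} = {p\<in>A. fst p = v} \<union> {p\<in>B. fst p = v}" by blast
  have 2: "{p\<in>A\<union>B. snd p = v} = {p\<in>A. snd p = v} \<union> {p\<in>B. snd p = v}" by blast
  show "card {p\<in>A\<union>B. fst p = v} = card {p\<in>A\<union>B. snd p = v}"
    unfolding 1 2
    apply (subst card_Un_disjoint, use assms in auto)
    apply (subst card_Un_disjoint, use assms in auto)
    using assms(4,5) unfolding Eul_def by metis
qed

lemma card_filter_list: "distinct xs \<Longrightarrow> card {e\<in>set xs. P e} = length (filter P xs)"
  by (metis distinct_card distinct_filter set_filter)

lemma Eul_list: "distinct xs \<Longrightarrow>
   Eul (set xs) \<longleftrightarrow> (\<forall>v. length (filter (\<lambda>p. fst p = v) xs) = length (filter (\<lambda>p. snd p = v) xs))"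
  unfolding Eul_def by (simp add: card_filter_list)

lemma Eul_c2: "x \<noteq> y \<Longrightarrow> Eul (c2 x y)"
proof -
  assume "x \<noteq> y"
  then have "c2 x y = set [(x,y),(y,x)]" "distinct [(x,y),(y,x)]" by (auto simp: c2_def)
  then show ?thesis using Eul_list[of "[(x,y),(y,x)]"] by (simp only:) auto
qed

lemma Eul_c3: "x \<noteq> y \<Longrightarrow> y \<noteq> z \<Longrightarrow> z \<noteq> x \<Longrightarrow> Eul (c3 x y z)"
proof -
  assume "x \<noteq> y" "y \<noteq> z" "z \<noteq> x"
  then have "c3 x y z = set [(x,y),(y,z),(z,x)]" "distinct [(x,y),(y,z),(z,x)]" by (auto simp: c3_def)
  then show ?thesis using Eul_list[of "[(x,y),(y,z),(z,x)]"] by (simp only:) auto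
qed

lemma Eul_c4: "distinct [x,y,z,w] \<Longrightarrow> Eul (c4 x y z w)"
proof -
  assume "distinct [x,y,z,w]"
  then have "c4 x y z w = set [(x,y),(y,z),(z,w),(w,x)]" "distinct [(x,y),(y,z),(z,w),(w,x)]"
    by (auto simp: c4_def)
  then show ?thesis using Eul_list[of "[(x,y),(y,z),(z,w),(w,x)]"] by (simp only:) auto
qed

lemma Eul_succ:
  assumes "finite A" "Eul A" "(x,y) \<in> A" shows "\<exists>z. (y,z) \<in> A"
proof -
  have "{p\<in>A. snd p = y} \<noteq> {}" using assms(3) by force
  then have "card {p\<in>A. snd p = y} > 0" using assms(1) by (simp add: card_gt_0_iff)
  then have "card {p\<in>A. fst p = y} > 0" using assms(2) unfolding Eul_def by metis
  then obtain p where "p \<in> A" "fst p = y" by (metis (mono_tags, lifting) card_gt_0_iff empty_Collect_eq)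
  then show ?thesis by (metis prod.collapse)
qed

lemma Eul_pred:
  assumes "finite A" "Eul A" "(x,y) \<in> A" shows "\<exists>w. (w,x) \<in> A"
proof -
  have "{p\<in>A. fst p = x} \<noteq> {}" using assms(3) by force
  then have "card {p\<in>A. fst p = x} > 0" using assms(1) by (simp add: card_gt_0_iff)
  then have "card {p\<in>A. snd p = x} > 0" using assms(2) unfolding Eul_def by metis
  then obtain p where "p \<in> A" "snd p = x" by (metis (mono_tags, lifting) card_gt_0_iff empty_Collect_eq)
  then show ?thesis by (metis prod.collapse)
qed

lemma card1_not_Eul:
  assumes "card A = 1" "Eul A" "noloop A" shows False
proof -
  obtain a where A: "A = {a}" using assms(1) card_1_singletonE by blast
  obtain x y where a: "a = (x,y)" by fastforce
  obtain z where "(y,z) \<in> A" using Eul_succ[of A x y] assms A a by auto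
  then show False using A a assms(3) unfolding noloop_def by auto
qed

lemma card2_Eul:
  assumes "card A = 2" "Eul A" "noloop A" shows "\<exists>x y. x \<noteq> y \<and> A = c2 x y"
proof -
  have fin: "finite A" using assms(1) by (metis card.infinite zero_neq_numeral)
  obtain x y where xy: "(x,y) \<in> A" using assms(1) by (metis card.empty ex_in_conv surj_pair zero_neq_numeral)
  have xny: "x \<noteq> y" using xy assms(3) unfolding noloop_def by fastforce
  obtain z where yz: "(y,z) \<in> A" using Eul_succ[OF fin assms(2) xy] by blast
  have "(y,z) \<noteq> (x,y)" using xny by simp
  then have A: "A = {(x,y),(y,z)}"
    using card_subset_eq[OF fin, of "{(x,y),(y,z)}"] xy yz assms(1) by auto
  obtain w where "(w,x) \<in> A" using Eul_pred[OF fin assms(2) xy] by blast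
  then have "z = x" using A xny by auto
  then show ?thesis using A xny unfolding c2_def by auto
qed

lemma shape3:
  assumes "card A = 3" "Eul A" "noloop A"
  shows "\<exists>x y z. x \<noteq> y \<and> y \<noteq> z \<and> z \<noteq> x \<and> A = c3 x y z"
proof -
  have fin: "finite A" using assms(1) by (metis card.infinite zero_neq_numeral)
  obtain x y where xy: "(x,y) \<in> A" using assms(1) by (metis card.empty ex_in_conv surj_pair zero_neq_numeral)
  have nl: "\<And>a b. (a,b) \<in> A \<Longrightarrow> a \<noteq> b" using assms(3) unfolding noloop_def by fastforce
  obtain z where yz: "(y,z) \<in> A" using Eul_succ[OF fin assms(2) xy] by blast
  show ?thesis
  proof (cases "z = x")
    case True
    have sub: "c2 x y \<subseteq> A" using xy yz True by (auto simp: c2_def)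
    have "card (A - c2 x y) = 1" using card_Diff_subset[OF _ sub] fin assms(1) nl[OF xy]
      by (simp add: c2_def)
    moreover have "Eul (A - c2 x y)" using Eul_diff[OF fin sub assms(2) Eul_c2] nl[OF xy] by blast
    moreover have "noloop (A - c2 x y)" using assms(3) unfolding noloop_def by blast
    ultimately show ?thesis using card1_not_Eul by blast
  next
    case False
    obtain w where zw: "(z,w) \<in> A" using Eul_succ[OF fin assms(2) yz] by blast
    have A: "A = {(x,y),(y,z),(z,w)}"
      using card_subset_eq[OF fin, of "{(x,y),(y,z),(z,w)}"] xy yz zw assms(1) False nl[OF xy] nl[OF yz]
      by (auto simp: card_insert_if)
    consider "w = x" | "w = y" | "w \<noteq> x" "w \<noteq> y" by blast
    then show ?thesis
    proof cases
      case 1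
      then show ?thesis using A False nl[OF xy] nl[OF yz] by (auto simp: c3_def)
    next
      case 2
      have sub: "c2 y z \<subseteq> A" using yz zw 2 by (auto simp: c2_def)
      have "card (A - c2 y z) = 1" using card_Diff_subset[OF _ sub] fin assms(1) nl[OF yz]
        by (simp add: c2_def)
      moreover have "Eul (A - c2 y z)" using Eul_diff[OF fin sub assms(2) Eul_c2] nl[OF yz] by blast
      moreover have "noloop (A - c2 y z)" using assms(3) unfolding noloop_def by blast
      ultimately show ?thesis using card1_not_Eul by blast
    next
      case 3
      obtain u where "(u,x) \<in> A" using Eul_pred[OF fin assms(2) xy] by blast
      then show ?thesis using A 3 False nl[OF xy] by auto
    qed
  qed
qed

lemma shape4:
  assumes "card A = 4" "Eul A" "noloop A"
  shows "(\<exists>x y z w. distinct [x,y,z,w] \<and> A = c4 x y z w) \<or>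
         (\<exists>x y u v. x \<noteq> y \<and> u \<noteq> v \<and> c2 x y \<inter> c2 u v = {} \<and> A = c2 x y \<union> c2 u v)"
proof -
  have fin: "finite A" using assms(1) by (metis card.infinite zero_neq_numeral)
  obtain x y where xy: "(x,y) \<in> A" using assms(1) by (metis card.empty ex_in_conv surj_pair zero_neq_numeral)
  have nl: "\<And>a b. (a,b) \<in> A \<Longrightarrow> a \<noteq> b" using assms(3) unfolding noloop_def by fastforce
  obtain z where yz: "(y,z) \<in> A" using Eul_succ[OF fin assms(2) xy] by blast
  have two: "\<exists>u v. u \<noteq> v \<and> c2 a b \<inter> c2 u v = {} \<and> A = c2 a b \<union> c2 u v"
    if ab: "(a,b) \<in> A" "(b,a) \<in> A" for a b
  proof -
    have sub: "c2 a b \<subseteq> A" using ab by (auto simp: c2_def)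
    have "card (A - c2 a b) = 2" using card_Diff_subset[OF _ sub] fin assms(1) nl[OF ab(1)]
      by (simp add: c2_def)
    moreover have "Eul (A - c2 a b)" using Eul_diff[OF fin sub assms(2) Eul_c2] nl[OF ab(1)] by blast
    moreover have "noloop (A - c2 a b)" using assms(3) unfolding noloop_def by blast
    ultimately obtain u v where uv: "u \<noteq> v" "A - c2 a b = c2 u v" using card2_Eul by blast
    have "c2 a b \<inter> c2 u v = {}" using uv(2) by blast
    moreover have "A = c2 a b \<union> c2 u v" using uv(2) sub by blast
    ultimately show ?thesis using uv(1) by blast
  qed
  show ?thesis
  proof (cases "z = x")
    case True
    then show ?thesis using two[OF xy] yz nl[OF xy] by blast
  next
    case False
    obtain w where zw: "(z,w) \<in> A" using Eul_succ[OF fin assms(2) yz] by blast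
    consider "w = x" | "w = y" | "w \<noteq> x" "w \<noteq> y" by blast
    then show ?thesis
    proof cases
      case 1
      have sub: "c3 x y z \<subseteq> A" using xy yz zw 1 by (auto simp: c3_def)
      have "card (A - c3 x y z) = 1" using card_Diff_subset[OF _ sub] fin assms(1) nl[OF xy] nl[OF yz] False
        by (simp add: c3_def)
      moreover have "Eul (A - c3 x y z)" using Eul_diff[OF fin sub assms(2) Eul_c3] nl[OF xy] nl[OF yz] False by blast
      moreover have "noloop (A - c3 x y z)" using assms(3) unfolding noloop_def by blast
      ultimately show ?thesis using card1_not_Eul by blast
    next
      case 2
      then show ?thesis using two[OF yz] zw nl[OF yz] by blast
    next
      case 3
      have wz: "w \<noteq> z" using nl[OF zw] by simp
      obtain u where ux: "(u,x) \<in> A" using Eul_pred[OF fin assms(2) xy] by blast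
      have A: "A = {(x,y),(y,z),(z,w),(u,x)}"
        using card_subset_eq[OF fin, of "{(x,y),(y,z),(z,w),(u,x)}"] xy yz zw ux assms(1) False 3
          nl[OF xy] nl[OF yz] wz
        by (auto simp: card_insert_if)
      obtain t where "(w,t) \<in> A" using Eul_succ[OF fin assms(2) zw] by blast
      then have "u = w" using A 3 wz by auto
      then show ?thesis using A 3 wz False nl[OF xy] nl[OF yz] unfolding c4_def by auto
    qed
  qed
qed




definition offd :: "nat set \<Rightarrow> (nat\<times>nat) set" where
  "offd S = {(x,y). x\<in>S \<and> y\<in>S \<and> x\<noteq>y}"

definition ES :: "nat \<Rightarrow> nat \<Rightarrow> (nat\<times>nat) set set" where
  "ES k b = {A. A \<subseteq> offd {1..b} \<and> card A = k \<and> Eul A}"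

lemma offd_Sigma: "offd S = Sigma S (\<lambda>x. S - {x})"
  unfolding offd_def by auto

lemma card_offd: "finite S \<Longrightarrow> card (offd S) = card S * (card S - 1)"
  unfolding offd_Sigma by simp

lemma finite_offd: "finite S \<Longrightarrow> finite (offd S)"
  unfolding offd_Sigma by simp

lemma finite_ES: "finite (ES k b)"
proof -
  have "ES k b \<subseteq> Pow (offd {1..b})" unfolding ES_def by auto
  then show ?thesis by (meson finite_Pow_iff finite_atLeastAtMost finite_offd finite_subset)
qed

lemma ES_noloop: "A \<in> ES k b \<Longrightarrow> noloop A"
  unfolding ES_def offd_def noloop_def by auto

lemma ES_split:
  "ES k (Suc b) = ES k b \<union> {A \<in> ES k (Suc b). \<not> A \<subseteq> offd {1..b}}"
proof -
  have "offd {1..b} \<subseteq> offd {1..Suc b}" unfolding offd_def by auto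
  then show ?thesis unfolding ES_def by auto
qed

lemma ES_split_card:
  "card (ES k (Suc b)) = card (ES k b) + card {A \<in> ES k (Suc b). \<not> A \<subseteq> offd {1..b}}"
  apply (subst ES_split)
  apply (rule card_Un_disjoint)
    apply (rule finite_ES)
   apply (rule finite_subset[OF _ finite_ES[of k "Suc b"]], blast)
  by (auto simp: ES_def)

lemma new_vertex:
  assumes "A \<subseteq> offd {1..Suc b}" "\<not> A \<subseteq> offd {1..b}"
  shows "\<exists>p\<in>A. fst p = Suc b \<or> snd p = Suc b"
proof -
  obtain p where p: "p \<in> A" "p \<notin> offd {1..b}" using assms(2) by blast
  have "p \<in> offd {1..Suc b}" using p assms(1) by blast
  then have "fst p = Suc b \<or> snd p = Suc b" using p(2) unfolding offd_def by auto
  then show ?thesis using p by blast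
qed

lemma ES_zero: "k > 0 \<Longrightarrow> ES k 0 = {}"
  unfolding ES_def offd_def by auto

lemma c3_rot: "c3 x y z = c3 y z x" unfolding c3_def by auto

lemma New3:
  "{A \<in> ES 3 (Suc b). \<not> A \<subseteq> offd {1..b}} = (\<lambda>(x,y). c3 (Suc b) x y) ` offd {1..b}"
  (is "?L = ?R")
proof
  show "?L \<subseteq> ?R"
  proof
    fix A assume A: "A \<in> ?L"
    then have es: "A \<in> ES 3 (Suc b)" by simp
    obtain x y z where xyz: "x \<noteq> y" "y \<noteq> z" "z \<noteq> x" "A = c3 x y z"
      using shape3[of A] es ES_noloop[OF es] by (auto simp: ES_def)
    have sub: "A \<subseteq> offd {1..Suc b}" using es by (simp add: ES_def)
    have vin: "x \<in> {1..Suc b}" "y \<in> {1..Suc b}" "z \<in> {1..Suc b}"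
      using sub xyz(4) unfolding offd_def c3_def by auto
    have "x = Suc b \<or> y = Suc b \<or> z = Suc b"
      using new_vertex[OF sub] A xyz(4) unfolding c3_def by auto
    have mem: "A \<in> ?R" if "A = c3 (Suc b) p q" "p \<noteq> q" "p \<noteq> Suc b" "q \<noteq> Suc b"
       "p \<in> {1..Suc b}" "q \<in> {1..Suc b}" for p q
    proof -
      have "(p,q) \<in> offd {1..b}" using that unfolding offd_def by auto
      then show ?thesis using that(1) by (auto intro!: image_eqI[of _ _ "(p,q)"])
    qed
    have r1: "c3 x y z = c3 y z x" "c3 x y z = c3 z x y" unfolding c3_def by auto
    show "A \<in> ?R"
      using \<open>x = Suc b \<or> y = Suc b \<or> z = Suc b\<close>
    proof (elim disjE)
      assume "x = Suc b"
      then have "A = c3 (Suc b) y z" using xyz(4) by simp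
      then show ?thesis by (rule mem) (use xyz vin \<open>x = Suc b\<close> in auto)
    next
      assume "y = Suc b"
      then have "A = c3 (Suc b) z x" using xyz(4) r1 by simp
      then show ?thesis by (rule mem) (use xyz vin \<open>y = Suc b\<close> in auto)
    next
      assume "z = Suc b"
      then have "A = c3 (Suc b) x y" using xyz(4) r1 by simp
      then show ?thesis by (rule mem) (use xyz vin \<open>z = Suc b\<close> in auto)
    qed
  qed
next
  show "?R \<subseteq> ?L"
  proof
    fix A assume "A \<in> ?R"
    then obtain x y where xy: "(x,y) \<in> offd {1..b}" "A = c3 (Suc b) x y" by auto
    have d: "x \<noteq> y" "x \<noteq> Suc b" "y \<noteq> Suc b" "x \<in> {1..b}" "y \<in> {1..b}"
      using xy(1) unfolding offd_def by auto
    have "A \<subseteq> offd {1..Suc b}" using xy d unfolding c3_def offd_def by auto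
    moreover have "card A = 3" using xy d unfolding c3_def by (auto simp: card_insert_if)
    moreover have "Eul A" using xy(2) Eul_c3 d by auto
    moreover have "\<not> A \<subseteq> offd {1..b}" using xy(2) unfolding c3_def offd_def by auto
    ultimately show "A \<in> ?L" by (simp add: ES_def)
  qed
qed

lemma card_New3: "card {A \<in> ES 3 (Suc b). \<not> A \<subseteq> offd {1..b}} = b * (b - 1)"
proof -
  have "inj_on (\<lambda>(x,y). c3 (Suc b) x y) (offd {1..b})"
  proof (rule inj_onI, clarify)
    fix x y x' y' assume a: "(x,y) \<in> offd {1..b}" "(x',y') \<in> offd {1..b}"
      and e: "c3 (Suc b) x y = c3 (Suc b) x' y'"
    have "(Suc b, x) \<in> c3 (Suc b) x y" "(y, Suc b) \<in> c3 (Suc b) x y"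
      unfolding c3_def by simp_all
    then have "(Suc b, x) \<in> c3 (Suc b) x' y'" "(y, Suc b) \<in> c3 (Suc b) x' y'"
      unfolding e by simp_all
    then show "x = x' \<and> y = y'" using a unfolding c3_def offd_def by auto
  qed
  then have "card ((\<lambda>(x,y). c3 (Suc b) x y) ` offd {1..b}) = card (offd {1..b})"
    by (rule card_image)
  then show ?thesis unfolding New3 using card_offd[of "{1..b}"] by simp
qed

lemma card_ES3: "card (ES 3 b) = 2 * (b choose 3)"
proof (induction b)
  case 0
  then show ?case by (simp add: ES_zero)
next
  case (Suc b)
  have "card (ES 3 (Suc b)) = 2 * (b choose 3) + b * (b - 1)"
    using ES_split_card[of 3 b] card_New3[of b] Suc by simp
  also have "b * (b - 1) = 2 * (b choose 2)"
  proof -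
    have "even (b * (b - 1))" by (cases b) auto
    then show ?thesis by (simp add: choose_two)
  qed
  finally show ?case by (simp add: numeral_3_eq_3 numeral_2_eq_2)
qed




definition Tri :: "nat \<Rightarrow> (nat \<times> nat \<times> nat) set" where
  "Tri b = Sigma {1..b} (\<lambda>x. Sigma ({1..b} - {x}) (\<lambda>y. {1..b} - {x,y}))"
definition P2 :: "nat \<Rightarrow> nat set set" where
  "P2 b = {T. T \<subseteq> {1..b} \<and> card T = 2}"
definition dbl :: "nat set \<Rightarrow> (nat\<times>nat) set" where
  "dbl T = {(p,q). p\<in>T \<and> q\<in>T \<and> p\<noteq>q}"
definition fa :: "nat \<Rightarrow> nat \<times> nat \<times> nat \<Rightarrow> (nat\<times>nat) set" where
  "fa b = (\<lambda>(x,y,z). c4 (Suc b) x y z)"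
definition fb :: "nat \<Rightarrow> nat set \<Rightarrow> (nat\<times>nat) set" where
  "fb b = (\<lambda>T. \<Union>t\<in>T. c2 (Suc b) t)"
definition fe :: "nat \<Rightarrow> nat \<times> nat set \<Rightarrow> (nat\<times>nat) set" where
  "fe b = (\<lambda>(x,T). c2 (Suc b) x \<union> dbl T)"

lemma P2_elem: "T \<in> P2 b \<Longrightarrow> \<exists>u v. T = {u,v} \<and> u \<noteq> v \<and> u \<in> {1..b} \<and> v \<in> {1..b}"
proof -
  assume T: "T \<in> P2 b"
  then have "card T = 2" "T \<subseteq> {1..b}" unfolding P2_def by auto
  then obtain u v where uv: "T = {u,v}" "u \<noteq> v" using card_2_iff by metis
  then show ?thesis using \<open>T \<subseteq> {1..b}\<close> by auto
qed

lemma fb_pair: "fb b {u,v} = c2 (Suc b) u \<union> c2 (Suc b) v"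
  unfolding fb_def by auto

lemma dbl_pair: "u \<noteq> v \<Longrightarrow> dbl {u,v} = c2 u v"
  unfolding dbl_def c2_def by auto

lemma c2_sym: "c2 x y = c2 y x" unfolding c2_def by auto

lemma c2_card: "x \<noteq> y \<Longrightarrow> card (c2 x y) = 2" unfolding c2_def by simp

lemma Eul2u:
  assumes "x \<noteq> y" "u \<noteq> v" "c2 x y \<inter> c2 u v = {}"
  shows "Eul (c2 x y \<union> c2 u v) \<and> card (c2 x y \<union> c2 u v) = 4"
proof
  show "Eul (c2 x y \<union> c2 u v)"
    by (rule Eul_union) (use assms Eul_c2 in \<open>auto simp: c2_def\<close>)
  show "card (c2 x y \<union> c2 u v) = 4"
    by (subst card_Un_disjoint) (use assms c2_card in \<open>auto simp: c2_def\<close>)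
qed

lemma new_not_old: "A \<subseteq> offd {1..b} \<Longrightarrow> (Suc b, t) \<notin> A"
  unfolding offd_def by auto

lemma mem_a_ES:
  assumes "x \<in> {1..b}" "y \<in> {1..b}" "z \<in> {1..b}" "distinct [x,y,z]"
  shows "c4 (Suc b) x y z \<in> {A \<in> ES 4 (Suc b). \<not> A \<subseteq> offd {1..b}}"
proof -
  have d: "distinct [Suc b, x, y, z]" using assms by auto
  have "c4 (Suc b) x y z \<subseteq> offd {1..Suc b}" using assms d unfolding c4_def offd_def by auto
  moreover have "card (c4 (Suc b) x y z) = 4" using d unfolding c4_def by (auto simp: card_insert_if)
  moreover have "Eul (c4 (Suc b) x y z)" using Eul_c4[OF d] .
  moreover have "(Suc b, x) \<in> c4 (Suc b) x y z" unfolding c4_def by simp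
  ultimately show ?thesis unfolding ES_def using new_not_old by blast
qed

lemma mem_2_ES:
  assumes "x \<noteq> y" "u \<noteq> v" "c2 x y \<inter> c2 u v = {}" "x = Suc b"
    "y \<in> {1..Suc b}" "u \<in> {1..Suc b}" "v \<in> {1..Suc b}"
  shows "c2 x y \<union> c2 u v \<in> {A \<in> ES 4 (Suc b). \<not> A \<subseteq> offd {1..b}}"
proof -
  have "c2 x y \<union> c2 u v \<subseteq> offd {1..Suc b}" using assms unfolding c2_def offd_def by auto
  moreover have "(x, y) \<in> c2 x y \<union> c2 u v" unfolding c2_def by simp
  ultimately show ?thesis unfolding ES_def using Eul2u[OF assms(1-3)] new_not_old assms(4) by blast
qed

lemma New4:
  "{A \<in> ES 4 (Suc b). \<not> A \<subseteq> offd {1..b}} =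
     fa b ` Tri b \<union> fb b ` P2 b \<union> fe b ` ({1..b} \<times> P2 b)"
  (is "?L = ?R")
proof
  show "?R \<subseteq> ?L"
  proof
    fix A assume "A \<in> ?R"
    then consider (a) p where "p \<in> Tri b" "A = fa b p" | (b) T where "T \<in> P2 b" "A = fb b T"
       | (e) x T where "x \<in> {1..b}" "T \<in> P2 b" "A = fe b (x,T)" by blast
    then show "A \<in> ?L"
    proof cases
      case a
      obtain x y z where p: "p = (x,y,z)" by (cases p) auto
      show ?thesis using a p mem_a_ES[of x b y z] unfolding Tri_def fa_def by auto
    next
      case b
      obtain u v where uv: "T = {u,v}" "u \<noteq> v" "u \<in> {1..b}" "v \<in> {1..b}" using P2_elem[OF b(1)] by blast
      have "c2 (Suc b) u \<inter> c2 (Suc b) v = {}" using uv unfolding c2_def by auto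
      moreover have "A = c2 (Suc b) u \<union> c2 (Suc b) v" using b(2) uv fb_pair by simp
      ultimately show ?thesis using mem_2_ES[of "Suc b" u "Suc b" v b] uv by auto
    next
      case e
      obtain u v where uv: "T = {u,v}" "u \<noteq> v" "u \<in> {1..b}" "v \<in> {1..b}" using P2_elem[OF e(2)] by blast
      have "c2 (Suc b) x \<inter> c2 u v = {}" using uv unfolding c2_def by auto
      moreover have "A = c2 (Suc b) x \<union> c2 u v" using e(3) uv dbl_pair unfolding fe_def by simp
      ultimately show ?thesis using mem_2_ES[of "Suc b" x u v b] uv e(1) by auto
    qed
  qed
next
  show "?L \<subseteq> ?R"
  proof
    fix A assume A: "A \<in> ?L"
    then have es: "A \<in> ES 4 (Suc b)" by simp
    have sub: "A \<subseteq> offd {1..Suc b}" using es by (simp add: ES_def)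
    obtain q where q: "q \<in> A" "fst q = Suc b \<or> snd q = Suc b" using new_vertex[OF sub] A by blast
    have shp: "(\<exists>x y z w. distinct [x,y,z,w] \<and> A = c4 x y z w) \<or>
         (\<exists>x y u v. x \<noteq> y \<and> u \<noteq> v \<and> c2 x y \<inter> c2 u v = {} \<and> A = c2 x y \<union> c2 u v)"
      using shape4[of A] es ES_noloop[OF es] by (auto simp: ES_def)
    have mema: "A \<in> ?R" if "A = c4 (Suc b) p1 p2 p3" "distinct [Suc b,p1,p2,p3]" for p1 p2 p3
    proof -
      have "p1 \<in> {1..Suc b}" "p2 \<in> {1..Suc b}" "p3 \<in> {1..Suc b}"
        using sub that(1) unfolding c4_def offd_def by auto
      then have "(p1,p2,p3) \<in> Tri b" using that(2) unfolding Tri_def by auto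
      moreover have "A = fa b (p1,p2,p3)" using that(1) unfolding fa_def by simp
      ultimately show ?thesis by blast
    qed
    have memb: "A \<in> ?R" if "A = c2 (Suc b) p \<union> c2 u v" "Suc b \<noteq> p" "u \<noteq> v"
        "c2 (Suc b) p \<inter> c2 u v = {}" for p u v
    proof -
      have vin: "p \<in> {1..Suc b}" "u \<in> {1..Suc b}" "v \<in> {1..Suc b}"
        using sub that(1) unfolding c2_def offd_def by auto
      have pin: "p \<in> {1..b}" using vin that(2) by auto
      consider "u = Suc b" | "v = Suc b" | "u \<noteq> Suc b" "v \<noteq> Suc b" by blast
      then show ?thesis
      proof cases
        case 1
        have "v \<noteq> p" using that(4) 1 unfolding c2_def by auto
        moreover have "v \<in> {1..b}" using vin 1 that(3) by auto
        ultimately have "{p,v} \<in> P2 b" using pin unfolding P2_def by auto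
        moreover have "A = fb b {p,v}" using that(1) 1 fb_pair by simp
        ultimately show ?thesis by blast
      next
        case 2
        have "u \<noteq> p" using that(4) 2 unfolding c2_def by auto
        moreover have "u \<in> {1..b}" using vin 2 that(3) by auto
        ultimately have "{p,u} \<in> P2 b" using pin unfolding P2_def by auto
        moreover have "A = fb b {p,u}" using that(1) 2 fb_pair c2_sym[of u v] by simp
        ultimately show ?thesis by blast
      next
        case 3
        have "{u,v} \<in> P2 b" using vin 3 that(3) unfolding P2_def by auto
        moreover have "A = fe b (p,{u,v})" using that(1) dbl_pair[OF that(3)] unfolding fe_def by simp
        ultimately show ?thesis using pin by blast
      qed
    qed
    from shp show "A \<in> ?R"
    proof (elim disjE exE conjE)
      fix x y z w assume d: "distinct [x,y,z,w]" and Ae: "A = c4 x y z w"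
      have r: "c4 x y z w = c4 y z w x" "c4 x y z w = c4 z w x y" "c4 x y z w = c4 w x y z"
        unfolding c4_def by auto
      have "x = Suc b \<or> y = Suc b \<or> z = Suc b \<or> w = Suc b"
        using q Ae unfolding c4_def by auto
      then show ?thesis
      proof (elim disjE)
        assume h: "x = Suc b" show ?thesis by (rule mema[of y z w]) (use Ae d h in auto)
      next
        assume h: "y = Suc b" show ?thesis by (rule mema[of z w x]) (use Ae d h r in auto)
      next
        assume h: "z = Suc b" show ?thesis by (rule mema[of w x y]) (use Ae d h r in auto)
      next
        assume h: "w = Suc b" show ?thesis by (rule mema[of x y z]) (use Ae d h r in auto)
      qed
    next
      fix x y u v assume h: "x \<noteq> y" "u \<noteq> v" "c2 x y \<inter> c2 u v = {}" "A = c2 x y \<union> c2 u v"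
      have "x = Suc b \<or> y = Suc b \<or> u = Suc b \<or> v = Suc b"
        using q h(4) unfolding c2_def by auto
      then show ?thesis
      proof (elim disjE)
        assume e: "x = Suc b" show ?thesis by (rule memb[of y u v]) (use h e in auto)
      next
        assume e: "y = Suc b" show ?thesis by (rule memb[of x u v]) (use h e c2_sym[of x y] in auto)
      next
        assume e: "u = Suc b" show ?thesis by (rule memb[of v x y]) (use h e in \<open>auto simp: Un_commute Int_commute\<close>)
      next
        assume e: "v = Suc b" show ?thesis by (rule memb[of u x y])
            (use h e c2_sym[of u v] in \<open>auto simp: Un_commute Int_commute\<close>)
      qed
    qed
  qed
qed




lemma Nb_fa: "(x,y,z) \<in> Tri b \<Longrightarrow> {t. (Suc b, t) \<in> fa b (x,y,z)} = {x} \<and> (x, Suc b) \<notin> fa b (x,y,z)"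
  unfolding Tri_def fa_def c4_def by auto

lemma Nb_fb: "T \<in> P2 b \<Longrightarrow> {t. (Suc b, t) \<in> fb b T} = T"
  unfolding P2_def fb_def c2_def by auto

lemma Nb_fe: "x \<in> {1..b} \<Longrightarrow> T \<in> P2 b \<Longrightarrow>
   {t. (Suc b, t) \<in> fe b (x,T)} = {x} \<and> (x, Suc b) \<in> fe b (x,T)"
  unfolding P2_def fe_def c2_def dbl_def by auto

lemma dbl_fst: "card T = 2 \<Longrightarrow> fst ` dbl T = T"
proof -
  assume "card T = 2"
  then obtain x y where xy: "T = {x,y}" "x \<noteq> y" using card_2_iff by metis
  then show ?thesis using dbl_pair[OF xy(2)] by (auto simp: c2_def)
qed

lemma dbl_from_fe: "x \<in> {1..b} \<Longrightarrow> T \<in> P2 b \<Longrightarrow>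
   dbl T = {p \<in> fe b (x,T). fst p \<noteq> Suc b \<and> snd p \<noteq> Suc b}"
  unfolding P2_def fe_def c2_def dbl_def by auto

lemma inj_fa: "inj_on (fa b) (Tri b)"
proof (rule inj_onI)
  fix p p' assume a0: "p \<in> Tri b" "p' \<in> Tri b" and e: "fa b p = fa b p'"
  obtain x y z where p: "p = (x,y,z)" by (cases p) auto
  obtain x' y' z' where p': "p' = (x',y',z')" by (cases p') auto
  have a: "(x,y,z) \<in> Tri b" "(x',y',z') \<in> Tri b" using a0 p p' by auto
  have "(Suc b, x) \<in> fa b (x,y,z)" "(x,y) \<in> fa b (x,y,z)" "(z, Suc b) \<in> fa b (x,y,z)"
    unfolding fa_def c4_def by simp_all
  then have "(Suc b, x) \<in> fa b (x',y',z')" "(x,y) \<in> fa b (x',y',z')" "(z, Suc b) \<in> fa b (x',y',z')"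
    using e p p' by simp_all
  then have "x = x' \<and> y = y' \<and> z = z'" using a unfolding Tri_def fa_def c4_def by auto
  then show "p = p'" using p p' by simp
qed

lemma inj_fb: "inj_on (fb b) (P2 b)"
  by (rule inj_onI) (metis Nb_fb)

lemma inj_fe: "inj_on (fe b) ({1..b} \<times> P2 b)"
proof (rule inj_onI, clarify)
  fix x T x' T' assume a: "x \<in> {1..b}" "T \<in> P2 b" "x' \<in> {1..b}" "T' \<in> P2 b"
    and e: "fe b (x,T) = fe b (x',T')"
  have "{t. (Suc b, t) \<in> fe b (x,T)} = {x}" "{t. (Suc b, t) \<in> fe b (x',T')} = {x'}"
    using Nb_fe[OF a(1,2)] Nb_fe[OF a(3,4)] by simp_all
  then have "{x} = {x'}" using e by simp
  then have xx: "x = x'" by simp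
  have "dbl T = dbl T'" using dbl_from_fe[OF a(1,2)] dbl_from_fe[OF a(3,4)] e by simp
  then have "fst ` dbl T = fst ` dbl T'" by simp
  moreover have "card T = 2" "card T' = 2" using a(2,4) unfolding P2_def by simp_all
  ultimately have "T = T'" using dbl_fst by metis
  then show "x = x' \<and> T = T'" using xx by simp
qed

lemma card_Tri: "card (Tri b) = b * (b - 1) * (b - 2)"
proof -
  have i: "card ({1..b} - {x,y}) = b - 2" if "x \<in> {1..b}" "y \<in> {1..b}" "x \<noteq> y" for x y
    using that by (subst card_Diff_subset) auto
  have "card (Sigma ({1..b} - {x}) (\<lambda>y. {1..b} - {x,y})) = (b - 1) * (b - 2)" if "x \<in> {1..b}" for x
  proof -
    have "card (Sigma ({1..b} - {x}) (\<lambda>y. {1..b} - {x,y})) = (\<Sum>y\<in>{1..b} - {x}. card ({1..b} - {x,y}))"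
      by simp
    also have "\<dots> = (\<Sum>y\<in>{1..b} - {x}. b - 2)" by (rule sum.cong) (use i that in auto)
    also have "\<dots> = (b - 1) * (b - 2)" using that by simp
    finally show ?thesis .
  qed
  then have "card (Tri b) = (\<Sum>x\<in>{1..b}. (b - 1) * (b - 2))"
    unfolding Tri_def by (subst card_SigmaI) (auto intro!: sum.cong)
  then show ?thesis by simp
qed

lemma card_P2: "card (P2 b) = b choose 2"
  unfolding P2_def using n_subsets[of "{1..b}" 2] by simp

lemma finite_P2: "finite (P2 b)"
  unfolding P2_def by simp

lemma finite_Tri: "finite (Tri b)"
  unfolding Tri_def by simp

lemma card_New4: "card {A \<in> ES 4 (Suc b). \<not> A \<subseteq> offd {1..b}} =
   b * (b - 1) * (b - 2) + (b choose 2) + b * (b choose 2)"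
proof -
  have d1: "fa b ` Tri b \<inter> fb b ` P2 b = {}"
  proof (rule ccontr)
    assume "fa b ` Tri b \<inter> fb b ` P2 b \<noteq> {}"
    then obtain p T where pT: "p \<in> Tri b" "T \<in> P2 b" "fa b p = fb b T" by blast
    obtain x y z where p: "p = (x,y,z)" by (cases p) auto
    have "{t. (Suc b, t) \<in> fa b p} = T" using pT Nb_fb by simp
    moreover have "{t. (Suc b, t) \<in> fa b p} = {x}" using pT(1) p Nb_fa[of x y z b] by simp
    ultimately show False using pT(2) unfolding P2_def by auto
  qed
  have d2: "(fa b ` Tri b \<union> fb b ` P2 b) \<inter> fe b ` ({1..b} \<times> P2 b) = {}"
  proof (rule ccontr)
    assume "(fa b ` Tri b \<union> fb b ` P2 b) \<inter> fe b ` ({1..b} \<times> P2 b) \<noteq> {}"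
    then obtain x T A where xT: "x \<in> {1..b}" "T \<in> P2 b" "A = fe b (x,T)"
      and "A \<in> fa b ` Tri b \<or> A \<in> fb b ` P2 b" by blast
    then consider p where "p \<in> Tri b" "A = fa b p" | T' where "T' \<in> P2 b" "A = fb b T'" by blast
    then show False
    proof cases
      case 1
      obtain x' y' z' where "p = (x',y',z')" by (cases p) auto
      then show False using 1 Nb_fa[of x' y' z' b] Nb_fe[OF xT(1,2)] xT(3) by auto
    next
      case 2
      have "card {t. (Suc b, t) \<in> A} = 2" using Nb_fb[OF 2(1)] 2 unfolding P2_def by simp
      moreover have "card {t. (Suc b, t) \<in> A} = 1" using Nb_fe[OF xT(1,2)] xT(3) by simp
      ultimately show False by simp
    qed
  qed
  have "card (fa b ` Tri b \<union> fb b ` P2 b \<union> fe b ` ({1..b} \<times> P2 b))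
     = card (fa b ` Tri b) + card (fb b ` P2 b) + card (fe b ` ({1..b} \<times> P2 b))"
    using d1 d2 finite_Tri finite_P2
    by (simp add: card_Un_disjoint)
  also have "\<dots> = b * (b - 1) * (b - 2) + (b choose 2) + b * (b choose 2)"
    using card_image[OF inj_fa] card_image[OF inj_fb] card_image[OF inj_fe] card_Tri card_P2
    by (simp add: card_cartesian_product)
  finally show ?thesis unfolding New4 .
qed

lemma six_choose3: "6 * (n choose 3) = n * (n - 1) * (n - 2)"
proof (induction n)
  case 0 then show ?case by simp
next
  case (Suc n)
  have "Suc n choose 3 = (n choose 2) + (n choose 3)"
    by (simp add: numeral_3_eq_3 numeral_2_eq_2)
  moreover have "2 * (n choose 2) = n * (n - 1)"
  proof -
    have "even (n * (n - 1))" by (cases n) auto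
    then show ?thesis by (simp add: choose_two)
  qed
  ultimately have "6 * (Suc n choose 3) = 3 * (n * (n - 1)) + n * (n - 1) * (n - 2)"
    using Suc by simp
  also have "\<dots> = Suc n * (Suc n - 1) * (Suc n - 2)"
  proof (cases n)
    case 0 then show ?thesis by simp
  next
    case (Suc m) then show ?thesis by (cases m) (simp_all add: algebra_simps)
  qed
  finally show ?case .
qed

lemma card_ES4: "card (ES 4 b) = 3 * (b choose 3) + 9 * (b choose 4)"
proof (induction b)
  case 0
  then show ?case by (simp add: ES_zero)
next
  case (Suc b)
  have rec: "card (ES 4 (Suc b)) = card (ES 4 b) + (b * (b - 1) * (b - 2) + (b choose 2) + b * (b choose 2))"
    using ES_split_card[of 4 b] card_New4[of b] by simp
  have c3: "Suc b choose 3 = (b choose 2) + (b choose 3)" by (simp add: numeral_3_eq_3 numeral_2_eq_2)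
  have c4: "Suc b choose 4 = (b choose 3) + (b choose 4)"
    by (simp add: numeral_3_eq_3 numeral_2_eq_2 eval_nat_numeral(2,3))
  have h2: "2 * (b choose 2) = b * (b - 1)"
  proof -
    have "even (b * (b - 1))" by (cases b) auto
    then show ?thesis by (simp add: choose_two)
  qed
  have h3: "6 * (b choose 3) = b * (b - 1) * (b - 2)" by (rule six_choose3)
  have h4: "b * (b * (b - 1)) = 2 * (b * (b - 1)) + b * (b - 1) * (b - 2)"
  proof (cases b)
    case 0 then show ?thesis by simp
  next
    case (Suc m) then show ?thesis by (cases m) (simp_all add: algebra_simps)
  qed
  have h5: "2 * (b * (b choose 2)) = b * (b * (b - 1))" using h2 by (metis mult.left_commute)
  show ?case using rec Suc.IH c3 c4 h2 h3 h4 h5 by linarith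
qed




definition edg :: "nat \<times> nat \<Rightarrow> vertex set" where
  "edg p = {(1, fst p), (2, snd p)}"

lemma edg_simp: "edg (j,l) = {(1,j),(2,l)}" unfolding edg_def by simp

lemma inj_edg: "inj edg"
proof (rule injI)
  fix p q assume e: "edg p = edg q"
  have "(1, fst p) \<in> edg p" "(2, snd p) \<in> edg p" unfolding edg_def by simp_all
  then have "(1, fst p) \<in> edg q" "(2, snd p) \<in> edg q" unfolding e by simp_all
  then show "p = q" unfolding edg_def by (auto simp: prod_eq_iff)
qed

lemma pt_edg: "partial_transpose (edg ` A) = edg ` (prod.swap ` A)"
proof
  show "partial_transpose (edg ` A) \<subseteq> edg ` (prod.swap ` A)"
  proof
    fix x assume "x \<in> partial_transpose (edg ` A)"
    then obtain i j k l where x: "x = {(k,j),(i,l)}" and m: "{(i,j),(k,l)} \<in> edg ` A"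
      unfolding partial_transpose_def by blast
    then obtain p q where pq: "(p,q) \<in> A" "{(i,j),(k,l)} = {(1::nat,p),(2::nat,q)}"
      unfolding edg_def by auto
    from pq(2) have "((i,j) = (1,p) \<and> (k,l) = (2,q)) \<or> ((i,j) = (2,q) \<and> (k,l) = (1,p))"
      by (simp add: doubleton_eq_iff)
    then have "x = edg (q,p)" using x unfolding edg_def by auto
    then show "x \<in> edg ` (prod.swap ` A)" using pq(1) by force
  qed
next
  show "edg ` (prod.swap ` A) \<subseteq> partial_transpose (edg ` A)"
  proof
    fix x assume "x \<in> edg ` (prod.swap ` A)"
    then obtain p q where pq: "(p,q) \<in> A" "x = edg (q,p)" by auto
    have "{(1::nat,p),(2::nat,q)} \<in> edg ` A" using pq(1) by (force simp: edg_def)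
    moreover have "x = {(2,p),(1,q)}" using pq(2) unfolding edg_def by auto
    ultimately show "x \<in> partial_transpose (edg ` A)" unfolding partial_transpose_def by blast
  qed
qed

lemma deg1: "degree (edg ` A) (1,v) = card {p\<in>A. fst p = v}"
proof -
  have "{e\<in>edg ` A. (1,v) \<in> e} = edg ` {p\<in>A. fst p = v}" unfolding edg_def by auto
  then show ?thesis unfolding degree_def using inj_edg
    by (simp add: card_image inj_on_subset)
qed

lemma deg2: "degree (edg ` A) (2,v) = card {p\<in>A. snd p = v}"
proof -
  have "{e\<in>edg ` A. (2,v) \<in> e} = edg ` {p\<in>A. snd p = v}" unfolding edg_def by auto
  then show ?thesis unfolding degree_def using inj_edg
    by (simp add: card_image inj_on_subset)
qed

lemma swap_fst: "card {p\<in>prod.swap ` A. fst p = v} = card {p\<in>A. snd p = v}"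
proof -
  have "{p\<in>prod.swap ` A. fst p = v} = prod.swap ` {p\<in>A. snd p = v}" by auto
  then show ?thesis by (simp add: card_image)
qed

lemma swap_snd: "card {p\<in>prod.swap ` A. snd p = v} = card {p\<in>A. fst p = v}"
proof -
  have "{p\<in>prod.swap ` A. snd p = v} = prod.swap ` {p\<in>A. fst p = v}" by auto
  then show ?thesis by (simp add: card_image)
qed

lemma grid2: "v \<in> grid 2 b \<Longrightarrow> \<exists>j. j \<in> {1..b} \<and> (v = (1,j) \<or> v = (2,j))"
  unfolding grid_def by auto

lemma D_two: "D k 2 b = card (ES k b)"
proof -
  let ?G = "{E. grid_graph 2 b E \<and> card E = k \<and> (\<forall>e\<in>E. diagonal_edge e) \<and> degree_criterion 2 b E}"
  have eq: "?G = (\<lambda>A. edg ` A) ` ES k b"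
  proof
    show "(\<lambda>A. edg ` A) ` ES k b \<subseteq> ?G"
    proof
      fix E assume "E \<in> (\<lambda>A. edg ` A) ` ES k b"
      then obtain A where A: "A \<in> ES k b" "E = edg ` A" by blast
      have sub: "A \<subseteq> offd {1..b}" and cA: "card A = k" and eA: "Eul A" using A(1) unfolding ES_def by auto
      have "grid_graph 2 b E"
        unfolding grid_graph_def
      proof
        fix e assume "e \<in> E"
        then obtain p q where "(p,q) \<in> A" "e = {(1,p),(2,q)}" using A(2) unfolding edg_def by auto
        then show "e \<subseteq> grid 2 b \<and> card e = 2" using sub unfolding grid_def offd_def by auto
      qed
      moreover have "card E = k"
      proof -
        have "card (edg ` A) = card A" by (rule card_image[OF inj_on_subset[OF inj_edg subset_UNIV]])
        then show ?thesis using A(2) cA by simp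
      qed
      moreover have "\<forall>e\<in>E. diagonal_edge e"
      proof
        fix e assume "e \<in> E"
        then obtain p q where pq: "(p,q) \<in> A" "e = {(1,p),(2,q)}" using A(2) unfolding edg_def by auto
        then have "p \<noteq> q" using sub unfolding offd_def by auto
        then show "diagonal_edge e" unfolding diagonal_edge_def pq(2)
          by (intro exI[of _ "1::nat"] exI[of _ p] exI[of _ "2::nat"] exI[of _ q]) simp
      qed
      moreover have "degree_criterion 2 b E"
        unfolding degree_criterion_def
      proof
        fix v assume "v \<in> grid 2 b"
        then obtain j where vj: "v = (1,j) \<or> v = (2,j)" using grid2 by blast
        have h1: "degree (edg ` A) (1,j) = degree (edg ` (prod.swap ` A)) (1,j)"
          unfolding deg1 swap_fst using eA unfolding Eul_def by metis
        have h2: "degree (edg ` A) (2,j) = degree (edg ` (prod.swap ` A)) (2,j)"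
          unfolding deg2 swap_snd using eA unfolding Eul_def by metis
        show "degree E v = degree (partial_transpose E) v"
          unfolding A(2) pt_edg using vj h1 h2 by metis
      qed
      ultimately show "E \<in> ?G" by blast
    qed
  next
    show "?G \<subseteq> (\<lambda>A. edg ` A) ` ES k b"
    proof
      fix E assume E: "E \<in> ?G"
      have dE: "\<forall>e\<in>E. diagonal_edge e" and gE: "grid_graph 2 b E" and cE: "card E = k"
        and crit: "degree_criterion 2 b E" using E by simp_all
      define A where "A = {p. edg p \<in> E}"
      have EA: "E = edg ` A"
      proof
        show "edg ` A \<subseteq> E" unfolding A_def by auto
        show "E \<subseteq> edg ` A"
        proof
          fix e assume e: "e \<in> E"
          have "diagonal_edge e" using dE e by blast
          then obtain i j k l where ijkl: "e = {(i,j),(k,l)}" "i \<noteq> k" "j \<noteq> l"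
            unfolding diagonal_edge_def by blast
          have "e \<subseteq> grid 2 b" using gE e unfolding grid_graph_def by blast
          then have "i \<in> {1,2}" "k \<in> {1,2}" using ijkl unfolding grid_def by auto
          then have "(i = 1 \<and> k = 2) \<or> (i = 2 \<and> k = 1)" using ijkl(2) by auto
          then have "e = edg (j,l) \<or> e = edg (l,j)" using ijkl(1) unfolding edg_def by auto
          then show "e \<in> edg ` A" using e unfolding A_def by auto
        qed
      qed
      have sub: "A \<subseteq> offd {1..b}"
      proof
        fix p assume "p \<in> A"
        then have pE: "edg p \<in> E" unfolding A_def by simp
        obtain x y where p: "p = (x,y)" by fastforce
        have "diagonal_edge (edg p)" using dE pE by blast
        then obtain i j k l where ijkl: "edg p = {(i,j),(k,l)}" "i \<noteq> k" "j \<noteq> l"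
          unfolding diagonal_edge_def by blast
        have "{(1::nat,x),(2::nat,y)} = {(i,j),(k,l)}" using ijkl(1) p unfolding edg_def by simp
        then have "x \<noteq> y" using ijkl(2,3) by (auto simp: doubleton_eq_iff)
        moreover have "edg p \<subseteq> grid 2 b" using gE pE unfolding grid_graph_def by blast
        ultimately show "p \<in> offd {1..b}" using p unfolding edg_def grid_def offd_def by auto
      qed
      have "card (edg ` A) = card A" by (rule card_image[OF inj_on_subset[OF inj_edg subset_UNIV]])
      then have "card A = k" using cE EA by simp
      moreover have "Eul A"
        unfolding Eul_def
      proof
        fix v
        show "card {p \<in> A. fst p = v} = card {p \<in> A. snd p = v}"
        proof (cases "v \<in> {1..b}")
          case True
          then have "(1,v) \<in> grid 2 b" unfolding grid_def by auto
          then have "degree E (1,v) = degree (partial_transpose E) (1,v)"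
            using crit unfolding degree_criterion_def by blast
          then show ?thesis unfolding EA pt_edg deg1 swap_fst .
        next
          case False
          then have e1: "{p \<in> A. fst p = v} = {}" and e2: "{p \<in> A. snd p = v} = {}"
            using sub unfolding offd_def by auto
          show ?thesis unfolding e1 e2 ..
        qed
      qed
      ultimately have "A \<in> ES k b" using sub unfolding ES_def by blast
      then show "E \<in> (\<lambda>A. edg ` A) ` ES k b" unfolding EA by (rule imageI)
    qed
  qed
  have "inj_on (\<lambda>A. edg ` A) (ES k b)"
    by (rule inj_onI) (simp add: inj_image_eq_iff[OF inj_edg])
  then show ?thesis unfolding D_def eq by (simp add: card_image)
qed




definition rect :: "nat \<Rightarrow> nat \<Rightarrow> nat \<Rightarrow> nat \<Rightarrow> vertex set set" where
  "rect i j k l = {{(i,j),(k,l)},{(k,j),(i,l)}}"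

definition Fm :: "nat set \<times> nat set \<Rightarrow> vertex set set" where
  "Fm RC = {e. \<exists>i k j l. fst RC = {i,k} \<and> snd RC = {j,l} \<and> i \<noteq> k \<and> j \<noteq> l \<and> e = {(i,j),(k,l)}}"

lemma Fm_pair:
  assumes "i \<noteq> k" "j \<noteq> l" shows "Fm ({i,k},{j,l}) = rect i j k l"
proof
  show "rect i j k l \<subseteq> Fm ({i,k},{j,l})"
  proof
    fix e assume "e \<in> rect i j k l"
    then have "e = {(i,j),(k,l)} \<or> e = {(k,j),(i,l)}" unfolding rect_def by simp
    then show "e \<in> Fm ({i,k},{j,l})"
    proof
      assume "e = {(i,j),(k,l)}"
      then show ?thesis unfolding Fm_def using assms
        by (intro CollectI exI[of _ i] exI[of _ k] exI[of _ j] exI[of _ l]) simp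
    next
      assume "e = {(k,j),(i,l)}"
      moreover have "{k,i} = {i,k}" by auto
      ultimately show ?thesis unfolding Fm_def using assms
        by (intro CollectI exI[of _ k] exI[of _ i] exI[of _ j] exI[of _ l]) simp
    qed
  qed
next
  show "Fm ({i,k},{j,l}) \<subseteq> rect i j k l"
  proof
    fix e assume "e \<in> Fm ({i,k},{j,l})"
    then obtain i' k' j' l' where h: "{i,k} = {i',k'}" "{j,l} = {j',l'}" "e = {(i',j'),(k',l')}"
      unfolding Fm_def by auto
    from h(1) have "(i' = i \<and> k' = k) \<or> (i' = k \<and> k' = i)" by (auto simp: doubleton_eq_iff)
    moreover from h(2) have "(j' = j \<and> l' = l) \<or> (j' = l \<and> l' = j)" by (auto simp: doubleton_eq_iff)
    ultimately show "e \<in> rect i j k l" using h(3) unfolding rect_def by (auto simp: insert_commute)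
  qed
qed

lemma pt_single: "partial_transpose {{(i,j),(k,l)}} = {{(k,j),(i,l)}}"
proof
  show "partial_transpose {{(i,j),(k,l)}} \<subseteq> {{(k,j),(i,l)}}"
  proof
    fix x assume "x \<in> partial_transpose {{(i,j),(k,l)}}"
    then obtain i' j' k' l' where x: "x = {(k',j'),(i',l')}" and m: "{(i',j'),(k',l')} = {(i,j),(k,l)}"
      unfolding partial_transpose_def by blast
    from m have "((i',j') = (i,j) \<and> (k',l') = (k,l)) \<or> ((i',j') = (k,l) \<and> (k',l') = (i,j))"
      by (simp add: doubleton_eq_iff)
    then show "x \<in> {{(k,j),(i,l)}}" using x by (auto simp: insert_commute)
  qed
next
  show "{{(k,j),(i,l)}} \<subseteq> partial_transpose {{(i,j),(k,l)}}"
    unfolding partial_transpose_def by blast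
qed

lemma pt_union: "partial_transpose (X \<union> Y) = partial_transpose X \<union> partial_transpose Y"
  unfolding partial_transpose_def by blast

lemma pt_rect: "partial_transpose (rect i j k l) = rect i j k l"
proof -
  have "rect i j k l = {{(i,j),(k,l)}} \<union> {{(k,j),(i,l)}}" unfolding rect_def by auto
  then have "partial_transpose (rect i j k l) = {{(k,j),(i,l)}} \<union> {{(i,j),(k,l)}}"
    by (simp only: pt_union pt_single)
  then show ?thesis unfolding rect_def by auto
qed

lemma rect_good:
  assumes "i \<noteq> k" "j \<noteq> l" "i \<in> {1..a}" "k \<in> {1..a}" "j \<in> {1..b}" "l \<in> {1..b}"
  shows "grid_graph a b (rect i j k l) \<and> card (rect i j k l) = 2 \<and>
         (\<forall>e\<in>rect i j k l. diagonal_edge e) \<and> degree_criterion a b (rect i j k l)"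
proof (intro conjI)
  show "grid_graph a b (rect i j k l)" unfolding grid_graph_def rect_def grid_def using assms by auto
  have "{(i,j),(k,l)} \<noteq> {(k,j),(i,l)}" using assms(1,2) by (auto simp: doubleton_eq_iff)
  then show "card (rect i j k l) = 2" unfolding rect_def by simp
  show "\<forall>e\<in>rect i j k l. diagonal_edge e"
  proof
    fix e assume "e \<in> rect i j k l"
    then have "e = {(i,j),(k,l)} \<or> e = {(k,j),(i,l)}" unfolding rect_def by simp
    then show "diagonal_edge e"
    proof
      assume "e = {(i,j),(k,l)}"
      then show ?thesis unfolding diagonal_edge_def using assms
        by (intro exI[of _ i] exI[of _ j] exI[of _ k] exI[of _ l]) simp
    next
      assume "e = {(k,j),(i,l)}"
      then show ?thesis unfolding diagonal_edge_def using assms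
        by (intro exI[of _ k] exI[of _ j] exI[of _ i] exI[of _ l]) simp
    qed
  qed
  show "degree_criterion a b (rect i j k l)" unfolding degree_criterion_def pt_rect by simp
qed

lemma deg_pos: "finite E \<Longrightarrow> e \<in> E \<Longrightarrow> v \<in> e \<Longrightarrow> degree E v > 0"
  unfolding degree_def by (subst card_gt_0_iff) auto

lemma deg_pos_ex: "degree E v > 0 \<Longrightarrow> \<exists>e\<in>E. v \<in> e"
  unfolding degree_def by (metis (mono_tags, lifting) card.empty less_irrefl mem_Collect_eq equals0I)

lemma D2_general:
  shows "D 2 a b = (a choose 2) * (b choose 2)"
proof -
  let ?G = "{E. grid_graph a b E \<and> card E = 2 \<and> (\<forall>e\<in>E. diagonal_edge e) \<and> degree_criterion a b E}"
  let ?Q = "{R. R \<subseteq> {1..a} \<and> card R = 2} \<times> {C. C \<subseteq> {1..b} \<and> card C = 2}"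
  have eq: "?G = Fm ` ?Q"
  proof
    show "Fm ` ?Q \<subseteq> ?G"
    proof
      fix E assume "E \<in> Fm ` ?Q"
      then obtain R C where RC: "R \<subseteq> {1..a}" "card R = 2" "C \<subseteq> {1..b}" "card C = 2" "E = Fm (R,C)"
        by auto
      obtain i k where ik: "R = {i,k}" "i \<noteq> k" using RC(2) card_2_iff by metis
      obtain j l where jl: "C = {j,l}" "j \<noteq> l" using RC(4) card_2_iff by metis
      have "E = rect i j k l" using RC(5) ik jl Fm_pair by simp
      then show "E \<in> ?G" using rect_good[of i k j l a b] ik jl RC(1,3) by simp
    qed
  next
    show "?G \<subseteq> Fm ` ?Q"
    proof
      fix E assume E: "E \<in> ?G"
      have dE: "\<forall>e\<in>E. diagonal_edge e" and gE: "grid_graph a b E" and cE: "card E = 2"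
        and crit: "degree_criterion a b E" using E by simp_all
      obtain e1 e2 where E12: "E = {e1,e2}" "e1 \<noteq> e2" using cE card_2_iff by metis
      have "diagonal_edge e1" using dE E12 by simp
      then obtain i j k l where e1: "e1 = {(i,j),(k,l)}" "i \<noteq> k" "j \<noteq> l"
        unfolding diagonal_edge_def by blast
      have "diagonal_edge e2" using dE E12 by simp
      then obtain i' j' k' l' where e2: "e2 = {(i',j'),(k',l')}" "i' \<noteq> k'" "j' \<noteq> l'"
        unfolding diagonal_edge_def by blast
      have ptE: "partial_transpose E = {{(k,j),(i,l)},{(k',j'),(i',l')}}"
      proof -
        have "E = {{(i,j),(k,l)}} \<union> {{(i',j'),(k',l')}}" using E12 e1 e2 by auto
        then have "partial_transpose E = {{(k,j),(i,l)}} \<union> {{(k',j'),(i',l')}}"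
          by (simp only: pt_union pt_single)
        then show ?thesis by auto
      qed
      have e1g: "e1 \<subseteq> grid a b" using gE E12 unfolding grid_graph_def by simp
      have fin: "finite E" using E12 by simp
      have key: "v \<in> {(k',j'),(i',l')}" if "v \<in> e1" for v
      proof -
        have "v \<in> grid a b" using that e1g by blast
        then have "degree E v = degree (partial_transpose E) v"
          using crit unfolding degree_criterion_def by blast
        moreover have "degree E v > 0" using deg_pos[OF fin _ that] E12 by simp
        ultimately obtain f where f: "f \<in> partial_transpose E" "v \<in> f" using deg_pos_ex by metis
        have "v \<notin> {(k,j),(i,l)}" using that e1 by auto
        then show ?thesis using f ptE by auto
      qed
      have "(i,j) \<in> {(k',j'),(i',l')}" "(k,l) \<in> {(k',j'),(i',l')}" using key e1 by auto
      then have "((i,j) = (k',j') \<and> (k,l) = (i',l')) \<or> ((i,j) = (i',l') \<and> (k,l) = (k',j'))"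
        using e1(2) by auto
      then have "e2 = {(k,j),(i,l)}" using e2(1) by (auto simp: insert_commute)
      then have Er: "E = rect i j k l" using E12 e1 unfolding rect_def by simp
      have "i \<in> {1..a}" "k \<in> {1..a}" "j \<in> {1..b}" "l \<in> {1..b}" using e1g e1 unfolding grid_def by auto
      then have "({i,k},{j,l}) \<in> ?Q" using e1(2,3) by auto
      moreover have "E = Fm ({i,k},{j,l})" using Er Fm_pair[OF e1(2,3)] by simp
      ultimately show "E \<in> Fm ` ?Q" by (rule rev_image_eqI)
    qed
  qed
  have inj: "inj_on Fm ?Q"
  proof (rule inj_onI)
    fix x y assume x: "x \<in> ?Q" and y: "y \<in> ?Q" and e: "Fm x = Fm y"
    have U: "\<Union>(Fm z) = fst z \<times> snd z" if "z \<in> ?Q" for z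
    proof -
      obtain R C where z0: "z = (R,C)" by (cases z)
      then have z: "z = (R,C)" "card R = 2" "card C = 2" using that by auto
      obtain i k where ik: "R = {i,k}" "i \<noteq> k" using z(2) card_2_iff by metis
      obtain j l where jl: "C = {j,l}" "j \<noteq> l" using z(3) card_2_iff by metis
      show ?thesis using Fm_pair[OF ik(2) jl(2)] z ik jl unfolding rect_def by auto
    qed
    have "fst x \<times> snd x = fst y \<times> snd y" using U[OF x] U[OF y] e by simp
    moreover have "snd x \<noteq> {}" "snd y \<noteq> {}" "fst x \<noteq> {}" "fst y \<noteq> {}" using x y by auto
    ultimately have "fst x = fst y" "snd x = snd y" by (metis fst_image_times snd_image_times)+
    then show "x = y" by (simp add: prod_eq_iff)
  qed
  have "card ?Q = (a choose 2) * (b choose 2)"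
    using n_subsets[of "{1..a}" 2] n_subsets[of "{1..b}" 2] by (simp add: card_cartesian_product)
  then show ?thesis unfolding D_def eq using card_image[OF inj] by simp
qed

theorem mainTheorem17:
  fixes a b :: nat
  assumes "a \<ge> 2" and "b \<ge> 2"
  shows "D 2 a b = (a choose 2) * (b choose 2) \<and>
         D 3 2 b = 2 * (b choose 3) \<and>
         D 4 2 b = 3 * (b choose 3) + 9 * (b choose 4)"
  using D2_general D_two card_ES3 card_ES4 by simp


end
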